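(* Let $\mathbf X=(X_1,\dots,X_d)$ be a random vector taking values in $\mathbb N^d$, let $\mathsf A=(a_{ij}) \in [0,1]^{c\times d}$ be a matrix whose columns $\mathbf a_j=(a_{1j},\dots,a_{cj})$ satisfy $|\mathbf a_j|=\sum_{i=1}^c a_{ij} \leq 1$, and let $\mathbf Y = \mathsf A \circ \mathbf X$ be the multinomial re-marking of $\mathbf X$ with parameters $\mathsf A$. Then: 1. $\mathbb E \mathbf Y = \mathsf A\, \mathbb E \mathbf X$; 2. $\mathsf{Disp}(\mathbf Y) = \mathsf A \,\mathsf{Disp}(\mathbf X)\, \mathsf A^\top$; 3. $\Phi_{\mathbf Y}(\mathbf t) = \Phi_{\mathbf X}(\mathsf A^\top \mathbf t)$.
   Context: Multinomial re-marking: given $\mathbf X$, let $\mathbf Z^{(1)},\dots,\mathbf Z^{(d)}$ be conditionally independent given $\mathbf X$ with $\mathbf Z^{(j)}\sim\operatorname{Multi}(X_j,\mathbf a_j)$ (each of the $X_j$ items is independently given new colour $i\in\{1,\dots,c\}$ with probability $a_{ij}$ or discarded with probability $1-|\mathbf a_j|$, and $Z^{(j)}_i$ counts those given colour $i$); then $\mathbf Y=\mathsf A\circ\mathbf X:=\sum_{j=1}^d\mathbf Z^{(j)}$. Dispersion–covariance matrix $\mathsf{Disp}(\mathbf X)$: diagonal entries $\operatorname{Disp}(X_i)=\operatorname{Var}(X_i)-\mathbb E X_i$, off-diagonal entries $\operatorname{Cov}(X_i,X_j)$. Multivariate factorial moment generating function: $\Phi_{\mathbf X}(\mathbf s)=\mathbb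 E\prod_{j}(1+s_j)^{X_j}$. The moments appearing are assumed to exist. *)

theory Defs
  imports "HOL-Probability.Probability"
begin

text \<open>Random vectors in N^d are pmfs on functions 'd => nat, with 'd a finite index type
  (d = CARD('d)); colours are a finite type 'c (c = CARD('c)).
  A matrix A in [0,1]^(c x d) is a function 'c => 'd => real, A i j = a_ij.\<close>

text \<open>Colour of a single item: Some i with probability a i, None (discarded) with
  probability 1 - |a|.\<close>
definition colour_pmf :: "('c::finite \<Rightarrow> real) \<Rightarrow> 'c option pmf" where
  "colour_pmf a = embed_pmf (\<lambda>oc. case oc of None \<Rightarrow> 1 - sum a UNIV | Some i \<Rightarrow> a i)"

text \<open>Multi(n, a): each of n items independently coloured, counts per colour.\<close>
primrec multi_pmf :: "nat \<Rightarrow> ('c::finite \<Rightarrow> real) \<Rightarrow> ('c \<Rightarrow> nat) pmf" where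
  "multi_pmf 0 a = return_pmf (\<lambda>_. 0)"
| "multi_pmf (Suc n) a = bind_pmf (multi_pmf n a)
      (\<lambda>z. map_pmf (\<lambda>oc. case oc of None \<Rightarrow> z | Some i \<Rightarrow> z(i := z i + 1)) (colour_pmf a))"

definition remark_pmf :: "('c::finite \<Rightarrow> 'd::finite \<Rightarrow> real) \<Rightarrow> ('d \<Rightarrow> nat) pmf \<Rightarrow> ('c \<Rightarrow> nat) pmf" where
  "remark_pmf A X = bind_pmf X (\<lambda>x.
      map_pmf (\<lambda>Z i. \<Sum>j\<in>UNIV. Z j i)
        (Pi_pmf UNIV (\<lambda>_. 0) (\<lambda>j. multi_pmf (x j) (\<lambda>i. A i j))))"

definition mean_pmf :: "('d \<Rightarrow> nat) pmf \<Rightarrow> 'd \<Rightarrow> real" where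
  "mean_pmf X j = measure_pmf.expectation X (\<lambda>x. real (x j))"

definition cov_pmf :: "('d \<Rightarrow> nat) pmf \<Rightarrow> 'd \<Rightarrow> 'd \<Rightarrow> real" where
  "cov_pmf X j l = measure_pmf.expectation X
     (\<lambda>x. (real (x j) - mean_pmf X j) * (real (x l) - mean_pmf X l))"

definition disp_pmf :: "('d \<Rightarrow> nat) pmf \<Rightarrow> 'd \<Rightarrow> 'd \<Rightarrow> real" where
  "disp_pmf X j l = (if j = l then cov_pmf X j j - mean_pmf X j else cov_pmf X j l)"

definition fmgf_pmf :: "('d::finite \<Rightarrow> nat) pmf \<Rightarrow> ('d \<Rightarrow> real) \<Rightarrow> real" where
  "fmgf_pmf X s = measure_pmf.expectation X (\<lambda>x. \<Prod>j\<in>UNIV. (1 + s j) ^ (x j))"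

end

theory Submission
  imports Defs
begin

lemma bind_pmf_nonneg:
  fixes g :: "'b \<Rightarrow> real"
  assumes nn: "\<And>y. 0 \<le> g y"
  assumes inn: "\<And>x. x \<in> set_pmf M \<Longrightarrow> integrable (measure_pmf (N x)) g"
    and out: "integrable (measure_pmf M) (\<lambda>x. measure_pmf.expectation (N x) g)"
  shows "integrable (measure_pmf (bind_pmf M N)) g"
    and "measure_pmf.expectation (bind_pmf M N) g = measure_pmf.expectation M (\<lambda>x. measure_pmf.expectation (N x) g)"
proof -
  have eq: "(\<integral>\<^sup>+y. ennreal (g y) \<partial>bind_pmf M N) = ennreal (measure_pmf.expectation M (\<lambda>x. measure_pmf.expectation (N x) g))"
  proof -
    have "(\<integral>\<^sup>+y. ennreal (g y) \<partial>bind_pmf M N) = (\<integral>\<^sup>+x. \<integral>\<^sup>+y. ennreal (g y) \<partial>N x \<partial>M)"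
      by simp
    also have "\<dots> = (\<integral>\<^sup>+x. ennreal (measure_pmf.expectation (N x) g) \<partial>M)"
      by (intro nn_integral_cong_AE AE_pmfI nn_integral_eq_integral inn) (auto simp: nn)
    also have "\<dots> = ennreal (measure_pmf.expectation M (\<lambda>x. measure_pmf.expectation (N x) g))"
      by (intro nn_integral_eq_integral out AE_pmfI integral_nonneg_AE) (auto simp: nn)
    finally show ?thesis .
  qed
  have "(\<integral>\<^sup>+y. ennreal (g y) \<partial>bind_pmf M N) < \<infinity>" unfolding eq by simp
  then show I: "integrable (measure_pmf (bind_pmf M N)) g"
    by (intro integrableI_nonneg) (auto simp: nn)
  have "ennreal (measure_pmf.expectation (bind_pmf M N) g) = (\<integral>\<^sup>+y. ennreal (g y) \<partial>bind_pmf M N)"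
    by (rule nn_integral_eq_integral[symmetric]) (auto simp: I nn)
  also note eq
  finally show "measure_pmf.expectation (bind_pmf M N) g = measure_pmf.expectation M (\<lambda>x. measure_pmf.expectation (N x) g)"
    by (subst (asm) ennreal_inj) (auto simp: nn integral_nonneg_AE)
qed

lemma bind_pmf_nonneg_rev:
  fixes g :: "'b \<Rightarrow> real"
  assumes nn: "\<And>y. 0 \<le> g y"
  assumes I: "integrable (measure_pmf (bind_pmf M N)) g"
  shows "\<And>x. x \<in> set_pmf M \<Longrightarrow> integrable (measure_pmf (N x)) g"
    and "integrable (measure_pmf M) (\<lambda>x. measure_pmf.expectation (N x) g)"
proof -
  have fin: "(\<integral>\<^sup>+x. \<integral>\<^sup>+y. ennreal (g y) \<partial>N x \<partial>M) \<noteq> \<infinity>"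
  proof -
    have "(\<integral>\<^sup>+y. ennreal (g y) \<partial>bind_pmf M N) = ennreal (measure_pmf.expectation (bind_pmf M N) g)"
      by (rule nn_integral_eq_integral) (auto simp: I nn)
    then show ?thesis by simp
  qed
  have ae: "AE x in M. (\<integral>\<^sup>+y. ennreal (g y) \<partial>N x) \<noteq> \<infinity>"
    by (rule nn_integral_PInf_AE) (use fin in auto)
  show inn: "integrable (measure_pmf (N x)) g" if "x \<in> set_pmf M" for x
  proof (rule integrableI_nonneg)
    show "(\<integral>\<^sup>+y. ennreal (g y) \<partial>N x) < \<infinity>"
      using ae that by (simp add: AE_measure_pmf_iff top.not_eq_extremum)
  qed (auto simp: nn)
  show "integrable (measure_pmf M) (\<lambda>x. measure_pmf.expectation (N x) g)"
  proof (rule integrableI_nonneg)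
    have "(\<integral>\<^sup>+x. ennreal (measure_pmf.expectation (N x) g) \<partial>M) = (\<integral>\<^sup>+x. \<integral>\<^sup>+y. ennreal (g y) \<partial>N x \<partial>M)"
      by (intro nn_integral_cong_AE AE_pmfI nn_integral_eq_integral[symmetric] inn) (auto simp: nn)
    then show "(\<integral>\<^sup>+x. ennreal (measure_pmf.expectation (N x) g) \<partial>M) < \<infinity>"
      using fin by (simp add: top.not_eq_extremum)
  qed (auto simp: nn integral_nonneg_AE)
qed

lemma bind_pmf_integral:
  fixes f :: "'b \<Rightarrow> real"
  assumes I: "integrable (measure_pmf (bind_pmf M N)) f"
  shows "measure_pmf.expectation (bind_pmf M N) f = measure_pmf.expectation M (\<lambda>x. measure_pmf.expectation (N x) f)"
proof -
  define fp where "fp = (\<lambda>y. max 0 (f y))"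
  define fm where "fm = (\<lambda>y. max 0 (- f y))"
  have f_eq: "f = (\<lambda>y. fp y - fm y)" by (auto simp: fp_def fm_def fun_eq_iff)
  have Ip: "integrable (measure_pmf (bind_pmf M N)) fp" unfolding fp_def using I by auto
  have Im: "integrable (measure_pmf (bind_pmf M N)) fm" unfolding fm_def using I by auto
  have nnp: "\<And>y. 0 \<le> fp y" and nnm: "\<And>y. 0 \<le> fm y" by (auto simp: fp_def fm_def)
  note p1 = bind_pmf_nonneg_rev[OF nnp Ip] and m1 = bind_pmf_nonneg_rev[OF nnm Im]
  have "measure_pmf.expectation (bind_pmf M N) f = measure_pmf.expectation (bind_pmf M N) fp - measure_pmf.expectation (bind_pmf M N) fm"
    by (subst f_eq, rule Bochner_Integration.integral_diff[OF Ip Im])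
  also have "\<dots> = measure_pmf.expectation M (\<lambda>x. measure_pmf.expectation (N x) fp) - measure_pmf.expectation M (\<lambda>x. measure_pmf.expectation (N x) fm)"
    using bind_pmf_nonneg(2)[OF nnp p1] bind_pmf_nonneg(2)[OF nnm m1] by simp
  also have "\<dots> = measure_pmf.expectation M (\<lambda>x. measure_pmf.expectation (N x) fp - measure_pmf.expectation (N x) fm)"
    by (rule Bochner_Integration.integral_diff[symmetric]) (use p1 m1 in auto)
  also have "\<dots> = measure_pmf.expectation M (\<lambda>x. measure_pmf.expectation (N x) f)"
  proof (intro integral_cong_AE AE_pmfI)
    fix x assume "x \<in> set_pmf M"
    have "measure_pmf.expectation (N x) (\<lambda>y. fp y - fm y) = measure_pmf.expectation (N x) fp - measure_pmf.expectation (N x) fm"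
      by (rule Bochner_Integration.integral_diff) (use p1 m1 \<open>x \<in> set_pmf M\<close> in auto)
    moreover have "(\<lambda>y. fp y - fm y) = f" using f_eq by simp
    ultimately show "measure_pmf.expectation (N x) fp - measure_pmf.expectation (N x) fm = measure_pmf.expectation (N x) f"
      by simp
  qed auto
  finally show ?thesis .
qed

lemma bind_pmf_integral_fin:
  fixes f :: "'b \<Rightarrow> real"
  assumes "finite (set_pmf (bind_pmf M N))"
  shows "measure_pmf.expectation (bind_pmf M N) f = measure_pmf.expectation M (\<lambda>x. measure_pmf.expectation (N x) f)"
  by (rule bind_pmf_integral, rule integrable_measure_pmf_finite[OF assms])

lemma pmf_colour:
  fixes a :: "'c::finite \<Rightarrow> real"
  assumes nn: "\<And>i. 0 \<le> a i" and le: "sum a UNIV \<le> 1"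
  shows "pmf (colour_pmf a) oc = (case oc of None \<Rightarrow> 1 - sum a UNIV | Some i \<Rightarrow> a i)"
  unfolding colour_pmf_def
proof (rule pmf_embed_pmf)
  show "\<And>x. 0 \<le> (case x of None \<Rightarrow> 1 - sum a UNIV | Some i \<Rightarrow> a i)"
    using nn le by (auto split: option.splits)
  have "(\<integral>\<^sup>+x. ennreal (case x of None \<Rightarrow> 1 - sum a UNIV | Some i \<Rightarrow> a i) \<partial>count_space UNIV)
      = (\<Sum>x\<in>UNIV. ennreal (case x of None \<Rightarrow> 1 - sum a UNIV | Some i \<Rightarrow> a i))"
    by (rule nn_integral_count_space_finite) simp
  also have "\<dots> = ennreal (\<Sum>x\<in>UNIV. (case x of None \<Rightarrow> 1 - sum a UNIV | Some i \<Rightarrow> a i))"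
    using nn le by (intro sum_ennreal) (auto split: option.splits)
  also have "(\<Sum>x\<in>UNIV. (case x of None \<Rightarrow> 1 - sum a UNIV | Some i \<Rightarrow> a i)) = 1"
    by (simp add: UNIV_option_conv sum.reindex)
  finally show "(\<integral>\<^sup>+x. ennreal (case x of None \<Rightarrow> 1 - sum a UNIV | Some i \<Rightarrow> a i) \<partial>count_space UNIV) = 1"
    by simp
qed

lemma expectation_colour:
  fixes a :: "'c::finite \<Rightarrow> real" and g :: "'c option \<Rightarrow> real"
  assumes nn: "\<And>i. 0 \<le> a i" and le: "sum a UNIV \<le> 1"
  shows "measure_pmf.expectation (colour_pmf a) g = (1 - sum a UNIV) * g None + (\<Sum>i\<in>UNIV. a i * g (Some i))"
proof -
  have "measure_pmf.expectation (colour_pmf a) g = (\<Sum>x\<in>UNIV. g x * pmf (colour_pmf a) x)"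
    by (rule integral_measure_pmf_real) auto
  also have "\<dots> = (1 - sum a UNIV) * g None + (\<Sum>i\<in>UNIV. a i * g (Some i))"
    by (simp add: UNIV_option_conv sum.reindex pmf_colour[OF nn le] mult.commute)
  finally show ?thesis .
qed

lemma finite_multi: "finite (set_pmf (multi_pmf n a))"
  by (induction n) auto

definition step_fun :: "('c \<Rightarrow> nat) \<Rightarrow> 'c option \<Rightarrow> ('c \<Rightarrow> nat)" where
  "step_fun z oc = (case oc of None \<Rightarrow> z | Some i \<Rightarrow> z(i := z i + 1))"

lemma multi_Suc': "multi_pmf (Suc n) a = bind_pmf (multi_pmf n a) (\<lambda>z. map_pmf (step_fun z) (colour_pmf a))"
  unfolding multi_pmf.simps by (intro bind_pmf_cong map_pmf_cong refl) (simp add: step_fun_def)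

lemma expectation_multi_Suc:
  fixes a :: "'c::finite \<Rightarrow> real" and g :: "('c \<Rightarrow> nat) \<Rightarrow> real"
  assumes nn: "\<And>i. 0 \<le> a i" and le: "sum a UNIV \<le> 1"
  shows "measure_pmf.expectation (multi_pmf (Suc n) a) g =
     measure_pmf.expectation (multi_pmf n a) (\<lambda>z. (1 - sum a UNIV) * g z + (\<Sum>m\<in>UNIV. a m * g (z(m := z m + 1))))"
  unfolding multi_Suc'
  by (subst bind_pmf_integral_fin)
     (use finite_multi[of "Suc n" a, unfolded multi_Suc'] in \<open>simp_all add: expectation_colour[OF nn le] step_fun_def\<close>)

context
  fixes a :: "'c::finite \<Rightarrow> real"
  assumes nn: "\<And>i. 0 \<le> a i" and le: "sum a UNIV \<le> 1"
begin

definition dl :: "'c \<Rightarrow> 'c \<Rightarrow> real" where "dl m i = (if m = i then 1 else 0)"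

lemma upd_real: "real ((z(m := z m + 1)) i) = real (z i) + dl m i"
  by (auto simp: dl_def)

lemma sum_dl: "(\<Sum>m\<in>UNIV. a m * dl m i) = a i"
  by (simp add: dl_def if_distrib cong: if_cong)

lemma dl_sq: "dl m i * dl m k = dl m i * dl i k"
  by (simp add: dl_def)

lemma multi_mean: "measure_pmf.expectation (multi_pmf n a) (\<lambda>z. real (z i)) = real n * a i"
proof (induction n)
  case 0 then show ?case by simp
next
  case (Suc n)
  have eq: "(1 - sum a UNIV) * real (z i) + (\<Sum>m\<in>UNIV. a m * real ((z(m := z m + 1)) i)) = real (z i) + a i" for z
    unfolding upd_real by (simp add: ring_distribs sum.distrib sum_distrib_right[symmetric] sum_dl)
  show ?case
    by (simp only: expectation_multi_Suc[OF nn le] eq)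
       (subst Bochner_Integration.integral_add, auto intro!: integrable_measure_pmf_finite finite_multi simp: Suc algebra_simps)
qed

lemma multi_prod2: "measure_pmf.expectation (multi_pmf n a) (\<lambda>z. real (z i) * real (z k)) =
   real n * (real n - 1) * a i * a k + (if i = k then real n * a i else 0)"
proof (induction n)
  case 0 then show ?case by simp
next
  case (Suc n)
  have eq: "(1 - sum a UNIV) * (real (z i) * real (z k)) + (\<Sum>m\<in>UNIV. a m * (real ((z(m := z m + 1)) i) * real ((z(m := z m + 1)) k)))
     = real (z i) * real (z k) + a k * real (z i) + a i * real (z k) + (if i = k then a i else 0)" for z
  proof -
    have "(\<Sum>m\<in>UNIV. a m * (real ((z(m := z m + 1)) i) * real ((z(m := z m + 1)) k)))
      = (\<Sum>m\<in>UNIV. a m * (real (z i) * real (z k)) + (a m * dl m k) * real (z i) + (a m * dl m i) * real (z k) + (a m * dl m i) * dl i k)"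
      unfolding upd_real by (intro sum.cong refl) (simp add: algebra_simps dl_def)
    also have "\<dots> = sum a UNIV * (real (z i) * real (z k)) + a k * real (z i) + a i * real (z k) + a i * dl i k"
      by (simp add: sum.distrib sum_distrib_right[symmetric] sum_dl)
    finally show ?thesis by (simp add: dl_def algebra_simps)
  qed
  have I: "integrable (measure_pmf (multi_pmf n a)) f" for f :: "_ \<Rightarrow> real"
    by (intro integrable_measure_pmf_finite finite_multi)
  show ?case
    apply (simp only: expectation_multi_Suc[OF nn le] eq)
    apply (simp add: I Suc multi_mean)
    apply (simp add: algebra_simps)
    done
qed

lemma multi_fmgf: "measure_pmf.expectation (multi_pmf n a) (\<lambda>z. \<Prod>i\<in>UNIV. (1 + t i) ^ z i) =
   (1 + (\<Sum>i\<in>UNIV. a i * t i)) ^ n"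
proof (induction n)
  case 0 then show ?case by simp
next
  case (Suc n)
  have p: "(\<Prod>i\<in>UNIV. (1 + t i) ^ (z(m := z m + 1)) i) = (1 + t m) * (\<Prod>i\<in>UNIV. (1 + t i) ^ z i)" for z m
  proof -
    have "(\<Prod>i\<in>UNIV. (1 + t i) ^ (z(m := z m + 1)) i) = (\<Prod>i\<in>UNIV. (1 + t i) ^ z i * (if i = m then 1 + t i else 1))"
      by (intro prod.cong) auto
    also have "\<dots> = (\<Prod>i\<in>UNIV. (1 + t i) ^ z i) * (1 + t m)"
      by (simp add: prod.distrib)
    finally show ?thesis by simp
  qed
  have eq: "(1 - sum a UNIV) * (\<Prod>i\<in>UNIV. (1 + t i) ^ z i) + (\<Sum>m\<in>UNIV. a m * (\<Prod>i\<in>UNIV. (1 + t i) ^ (z(m := z m + 1)) i))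
     = (1 + (\<Sum>i\<in>UNIV. a i * t i)) * (\<Prod>i\<in>UNIV. (1 + t i) ^ z i)" for z
  proof -
    have "(\<Sum>m\<in>UNIV. a m * ((1 + t m) * (\<Prod>i\<in>UNIV. (1 + t i) ^ z i))) =
       sum a UNIV * (\<Prod>i\<in>UNIV. (1 + t i) ^ z i) + (\<Sum>i\<in>UNIV. a i * t i) * (\<Prod>i\<in>UNIV. (1 + t i) ^ z i)"
      by (simp add: sum_distrib_right sum.distrib algebra_simps)
    then show ?thesis unfolding p by (simp add: ring_distribs)
  qed
  show ?case
    by (simp only: expectation_multi_Suc[OF nn le] eq) (simp add: Suc)
qed

end

lemma finite_Pi_pmf:
  assumes "finite A" "\<And>x. x \<in> A \<Longrightarrow> finite (set_pmf (p x))"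
  shows "finite (set_pmf (Pi_pmf A d p))"
  by (rule finite_subset[OF set_Pi_pmf_subset'[OF assms(1)]]) (use assms in auto)

lemma expectation_prod_Pi_pmf_fin:
  fixes f :: "_ \<Rightarrow> _ \<Rightarrow> real"
  assumes "finite A" "\<And>x. x \<in> A \<Longrightarrow> finite (set_pmf (p x))"
  shows "measure_pmf.expectation (Pi_pmf A d p) (\<lambda>y. \<Prod>x\<in>A. f x (y x)) =
         (\<Prod>x\<in>A. measure_pmf.expectation (p x) (f x))"
  using assms
proof (induction A rule: finite_induct)
  case empty
  then show ?case by simp
next
  case (insert x F)
  have finF: "finite (set_pmf (Pi_pmf F d p))" by (rule finite_Pi_pmf) (use insert in auto)
  have finI: "finite (set_pmf (Pi_pmf (insert x F) d p))" by (rule finite_Pi_pmf) (use insert in auto)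
  have "measure_pmf.expectation (Pi_pmf (insert x F) d p) (\<lambda>y. \<Prod>z\<in>insert x F. f z (y z)) =
     measure_pmf.expectation (bind_pmf (p x) (\<lambda>v. bind_pmf (Pi_pmf F d p) (\<lambda>g. return_pmf (g(x := v)))))
        (\<lambda>y. \<Prod>z\<in>insert x F. f z (y z))"
    by (simp add: Pi_pmf_insert'[OF insert(1,2)])
  also have "\<dots> = measure_pmf.expectation (p x) (\<lambda>v. measure_pmf.expectation
        (bind_pmf (Pi_pmf F d p) (\<lambda>g. return_pmf (g(x := v)))) (\<lambda>y. \<Prod>z\<in>insert x F. f z (y z)))"
    by (rule bind_pmf_integral_fin) (use finI in \<open>simp add: Pi_pmf_insert'[OF insert(1,2)]\<close>)
  also have "\<dots> = measure_pmf.expectation (p x) (\<lambda>v. measure_pmf.expectation (Pi_pmf F d p)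
        (\<lambda>g. f x v * (\<Prod>z\<in>F. f z (g z))))"
  proof -
    have inner: "measure_pmf.expectation (bind_pmf (Pi_pmf F d p) (\<lambda>g. return_pmf (g(x := v)))) (\<lambda>y. \<Prod>z\<in>insert x F. f z (y z))
       = measure_pmf.expectation (Pi_pmf F d p) (\<lambda>g. f x v * (\<Prod>z\<in>F. f z (g z)))" for v
    proof -
    have "measure_pmf.expectation (bind_pmf (Pi_pmf F d p) (\<lambda>g. return_pmf (g(x := v)))) (\<lambda>y. \<Prod>z\<in>insert x F. f z (y z))
       = measure_pmf.expectation (Pi_pmf F d p) (\<lambda>g. measure_pmf.expectation (return_pmf (g(x := v))) (\<lambda>y. \<Prod>z\<in>insert x F. f z (y z)))"
      by (rule bind_pmf_integral_fin) (use finF in simp)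
    also have "\<dots> = measure_pmf.expectation (Pi_pmf F d p) (\<lambda>g. f x v * (\<Prod>z\<in>F. f z (g z)))"
    proof (intro Bochner_Integration.integral_cong refl)
      fix g
      have "(\<Prod>z\<in>F. f z ((g(x := v)) z)) = (\<Prod>z\<in>F. f z (g z))"
        by (intro prod.cong refl) (use insert(2) in auto)
      then show "measure_pmf.expectation (return_pmf (g(x := v))) (\<lambda>y. \<Prod>z\<in>insert x F. f z (y z)) = f x v * (\<Prod>z\<in>F. f z (g z))"
        using insert(1,2) by simp
    qed
    finally show "measure_pmf.expectation (bind_pmf (Pi_pmf F d p) (\<lambda>g. return_pmf (g(x := v)))) (\<lambda>y. \<Prod>z\<in>insert x F. f z (y z))
       = measure_pmf.expectation (Pi_pmf F d p) (\<lambda>g. f x v * (\<Prod>z\<in>F. f z (g z)))" .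
    qed
    show ?thesis by (simp only: inner)
  qed
  also have "\<dots> = (\<Prod>z\<in>insert x F. measure_pmf.expectation (p z) (f z))"
    using insert by simp
  finally show ?case .
qed

definition Kx :: "('c::finite \<Rightarrow> 'd::finite \<Rightarrow> real) \<Rightarrow> ('d \<Rightarrow> nat) \<Rightarrow> ('d \<Rightarrow> 'c \<Rightarrow> nat) pmf" where
  "Kx A x = Pi_pmf UNIV (\<lambda>_. 0) (\<lambda>j. multi_pmf (x j) (\<lambda>i. A i j))"

lemma remark_eq: "remark_pmf A X = bind_pmf X (\<lambda>x. map_pmf (\<lambda>Z i. \<Sum>j\<in>UNIV. Z j i) (Kx A x))"
  by (simp add: remark_pmf_def Kx_def)

lemma finite_Kx: "finite (set_pmf (Kx A x))"
  unfolding Kx_def by (rule finite_Pi_pmf) (auto intro: finite_multi)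

lemma Kx_component:
  fixes h :: "('c::finite \<Rightarrow> nat) \<Rightarrow> real"
  shows "measure_pmf.expectation (Kx A x) (\<lambda>Z. h (Z j)) = measure_pmf.expectation (multi_pmf (x j) (\<lambda>i. A i j)) h"
proof -
  have "measure_pmf.expectation (Kx A x) (\<lambda>Z. h (Z j)) = measure_pmf.expectation (map_pmf (\<lambda>Z. Z j) (Kx A x)) h"
    by simp
  also have "map_pmf (\<lambda>Z. Z j) (Kx A x) = multi_pmf (x j) (\<lambda>i. A i j)"
    unfolding Kx_def by (subst Pi_pmf_component) auto
  finally show ?thesis .
qed

lemma Kx_prod:
  fixes f :: "'d::finite \<Rightarrow> ('c::finite \<Rightarrow> nat) \<Rightarrow> real"
  shows "measure_pmf.expectation (Kx A x) (\<lambda>Z. \<Prod>j\<in>UNIV. f j (Z j)) =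
    (\<Prod>j\<in>UNIV. measure_pmf.expectation (multi_pmf (x j) (\<lambda>i. A i j)) (f j))"
  unfolding Kx_def by (rule expectation_prod_Pi_pmf_fin) (auto intro: finite_multi)

context
  fixes A :: "'c::finite \<Rightarrow> 'd::finite \<Rightarrow> real"
  assumes A_nonneg: "\<And>i j. 0 \<le> A i j"
    and A_col: "\<And>j. (\<Sum>i\<in>UNIV. A i j) \<le> 1"
begin

lemma IK: fixes f :: "_ \<Rightarrow> real" shows "integrable (measure_pmf (Kx A x)) f"
  by (intro integrable_measure_pmf_finite finite_Kx)

lemma K_mean: "measure_pmf.expectation (Kx A x) (\<lambda>Z. real (\<Sum>j\<in>UNIV. Z j i)) = (\<Sum>j\<in>UNIV. A i j * real (x j))"
proof -
  have "measure_pmf.expectation (Kx A x) (\<lambda>Z. real (\<Sum>j\<in>UNIV. Z j i)) = (\<Sum>j\<in>UNIV. measure_pmf.expectation (Kx A x) (\<lambda>Z. real (Z j i)))"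
    by (simp add: IK)
  also have "\<dots> = (\<Sum>j\<in>UNIV. A i j * real (x j))"
  proof (intro sum.cong refl)
    fix j
    have "measure_pmf.expectation (Kx A x) (\<lambda>Z. real (Z j i)) = measure_pmf.expectation (multi_pmf (x j) (\<lambda>i. A i j)) (\<lambda>z. real (z i))"
      by (rule Kx_component[where h="\<lambda>z. real (z i)"])
    then show "measure_pmf.expectation (Kx A x) (\<lambda>Z. real (Z j i)) = A i j * real (x j)"
      by (simp add: multi_mean[OF A_nonneg A_col] mult.commute)
  qed
  finally show ?thesis .
qed

lemma K_fmgf: "measure_pmf.expectation (Kx A x) (\<lambda>Z. \<Prod>i\<in>UNIV. (1 + t i) ^ (\<Sum>j\<in>UNIV. Z j i)) =
   (\<Prod>j\<in>UNIV. (1 + (\<Sum>i\<in>UNIV. A i j * t i)) ^ x j)"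
proof -
  have eqZ: "(\<lambda>Z. \<Prod>i\<in>UNIV. (1 + t i) ^ (\<Sum>j\<in>UNIV. Z j i)) = (\<lambda>Z. \<Prod>j\<in>UNIV. (\<lambda>j z. \<Prod>i\<in>UNIV. (1 + t i) ^ z i) j (Z j))"
    by (intro ext) (simp only: power_sum, subst prod.swap, simp)
  have "measure_pmf.expectation (Kx A x) (\<lambda>Z. \<Prod>i\<in>UNIV. (1 + t i) ^ (\<Sum>j\<in>UNIV. Z j i)) =
     (\<Prod>j\<in>UNIV. measure_pmf.expectation (multi_pmf (x j) (\<lambda>i. A i j)) (\<lambda>z. \<Prod>i\<in>UNIV. (1 + t i) ^ z i))"
    unfolding eqZ by (rule Kx_prod[where f="\<lambda>j z. \<Prod>i\<in>UNIV. (1 + t i) ^ z i"])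
  also have "\<dots> = (\<Prod>j\<in>UNIV. (1 + (\<Sum>i\<in>UNIV. A i j * t i)) ^ x j)"
    by (intro prod.cong refl multi_fmgf) (auto intro: A_nonneg A_col)
  finally show ?thesis .
qed

lemma K_pair:
  "measure_pmf.expectation (Kx A x) (\<lambda>Z. real (Z j i) * real (Z l k)) =
     A i j * A k l * (real (x j) * real (x l) - (if j = l then real (x j) else 0))
     + (if j = l \<and> i = k then A i j * real (x j) else 0)"
proof (cases "j = l")
  case True
  then show ?thesis
    by (simp add: Kx_component[where h = "\<lambda>z. real (z i) * real (z k)"] multi_prod2[OF A_nonneg A_col] algebra_simps)
next
  case False
  define f where "f m z = (if m = j then real (z i) else 1) * (if m = l then real (z k) else 1)" for m and z :: "'c \<Rightarrow> nat"
  have eqZ: "(\<lambda>Z. real (Z j i) * real (Z l k)) = (\<lambda>Z. \<Prod>m\<in>UNIV. f m (Z m))"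
    by (simp add: f_def prod.distrib)
  have "measure_pmf.expectation (Kx A x) (\<lambda>Z. real (Z j i) * real (Z l k)) =
      (\<Prod>m\<in>UNIV. measure_pmf.expectation (multi_pmf (x m) (\<lambda>i. A i m)) (f m))"
    unfolding eqZ by (rule Kx_prod)
  also have "\<dots> = (\<Prod>m\<in>UNIV. (if m = j then real (x j) * A i j else 1) * (if m = l then real (x l) * A k l else 1))"
  proof (intro prod.cong refl)
    fix m
    show "measure_pmf.expectation (multi_pmf (x m) (\<lambda>i. A i m)) (f m) =
      (if m = j then real (x j) * A i j else 1) * (if m = l then real (x l) * A k l else 1)"
    proof -
      have fm: "f m = (\<lambda>z. (if m = j then real (z i) else 1) * (if m = l then real (z k) else 1))"
        by (simp add: fun_eq_iff f_def)
      show ?thesis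
        unfolding fm using False by (auto simp: multi_mean[OF A_nonneg A_col])
    qed
  qed
  also have "\<dots> = A i j * A k l * (real (x j) * real (x l))"
    using False by (simp add: prod.distrib algebra_simps)
  finally show ?thesis using False by simp
qed

lemma K_prod:
  "measure_pmf.expectation (Kx A x) (\<lambda>Z. real (\<Sum>j\<in>UNIV. Z j i) * real (\<Sum>j\<in>UNIV. Z j k)) =
     (\<Sum>j\<in>UNIV. \<Sum>l\<in>UNIV. A i j * A k l * (real (x j) * real (x l) - (if j = l then real (x j) else 0)))
     + (if i = k then (\<Sum>j\<in>UNIV. A i j * real (x j)) else 0)"
proof -
  have eqZ: "(\<lambda>Z. real (\<Sum>j\<in>UNIV. Z j i) * real (\<Sum>j\<in>UNIV. Z j k)) = (\<lambda>Z. \<Sum>j\<in>UNIV. \<Sum>l\<in>UNIV. real (Z j i) * real (Z l k))"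
    by (simp add: sum_product)
  have "measure_pmf.expectation (Kx A x) (\<lambda>Z. real (\<Sum>j\<in>UNIV. Z j i) * real (\<Sum>j\<in>UNIV. Z j k)) =
     (\<Sum>j\<in>UNIV. \<Sum>l\<in>UNIV. measure_pmf.expectation (Kx A x) (\<lambda>Z. real (Z j i) * real (Z l k)))"
    unfolding eqZ by (simp add: IK Bochner_Integration.integral_sum)
  also have "\<dots> = (\<Sum>j\<in>UNIV. \<Sum>l\<in>UNIV. A i j * A k l * (real (x j) * real (x l) - (if j = l then real (x j) else 0))
     + (if j = l \<and> i = k then A i j * real (x j) else 0))"
    by (simp add: K_pair)
  also have "\<dots> = (\<Sum>j\<in>UNIV. \<Sum>l\<in>UNIV. A i j * A k l * (real (x j) * real (x l) - (if j = l then real (x j) else 0)))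
     + (if i = k then (\<Sum>j\<in>UNIV. A i j * real (x j)) else 0)"
  proof -
    have d: "(\<Sum>j\<in>UNIV. \<Sum>l\<in>UNIV. (if j = l \<and> i = k then A i j * real (x j) else 0)) =
        (if i = k then (\<Sum>j\<in>UNIV. A i j * real (x j)) else 0)"
      by (cases "i = k") simp_all
    show ?thesis by (simp only: sum.distrib d)
  qed
  finally show ?thesis .
qed

end

lemma cov_expand:
  fixes P :: "('d \<Rightarrow> nat) pmf"
  assumes "integrable (measure_pmf P) (\<lambda>y. real (y i))" "integrable (measure_pmf P) (\<lambda>y. real (y k))"
    "integrable (measure_pmf P) (\<lambda>y. real (y i) * real (y k))"
  shows "cov_pmf P i k = measure_pmf.expectation P (\<lambda>y. real (y i) * real (y k)) - mean_pmf P i * mean_pmf P k"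
proof -
  have "cov_pmf P i k = measure_pmf.expectation P (\<lambda>y. real (y i) * real (y k) - mean_pmf P k * real (y i) - mean_pmf P i * real (y k) + mean_pmf P i * mean_pmf P k)"
    unfolding cov_pmf_def by (intro Bochner_Integration.integral_cong refl) (simp add: algebra_simps)
  also have "\<dots> = measure_pmf.expectation P (\<lambda>y. real (y i) * real (y k)) - mean_pmf P k * mean_pmf P i - mean_pmf P i * mean_pmf P k + mean_pmf P i * mean_pmf P k"
    using assms by (simp add: mean_pmf_def)
  finally show ?thesis by simp
qed

lemma map_K_fin: "finite (set_pmf (map_pmf (\<lambda>Z i. \<Sum>j\<in>UNIV. Z j i) (Kx A x)))"
  by (auto intro: finite_imageI finite_Kx)

context
  fixes A :: "'c::finite \<Rightarrow> 'd::finite \<Rightarrow> real" and X :: "('d \<Rightarrow> nat) pmf"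
  assumes A_nonneg: "\<And>i j. 0 \<le> A i j"
    and A_col: "\<And>j. (\<Sum>i\<in>UNIV. A i j) \<le> 1"
begin

lemma part1:
  assumes intX: "\<And>j. integrable (measure_pmf X) (\<lambda>x. real (x j))"
  shows "integrable (measure_pmf (remark_pmf A X)) (\<lambda>y. real (y i))"
    and "mean_pmf (remark_pmf A X) i = (\<Sum>j\<in>UNIV. A i j * mean_pmf X j)"
proof -
  have KM: "measure_pmf.expectation (map_pmf (\<lambda>Z i. \<Sum>j\<in>UNIV. Z j i) (Kx A x)) (\<lambda>y. real (y i)) = (\<Sum>j\<in>UNIV. A i j * real (x j))" for x
    by (simp only: integral_map_pmf K_mean[OF A_nonneg A_col])
  have out: "integrable (measure_pmf X) (\<lambda>x. measure_pmf.expectation (map_pmf (\<lambda>Z i. \<Sum>j\<in>UNIV. Z j i) (Kx A x)) (\<lambda>y. real (y i)))"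
    by (simp only: KM) (simp add: intX)
  note R = bind_pmf_nonneg[where g="\<lambda>y. real (y i)", OF _ integrable_measure_pmf_finite[OF map_K_fin] out, folded remark_eq]
  show "integrable (measure_pmf (remark_pmf A X)) (\<lambda>y. real (y i))" using R(1) by simp
  have "mean_pmf (remark_pmf A X) i = measure_pmf.expectation X (\<lambda>x. \<Sum>j\<in>UNIV. A i j * real (x j))"
    unfolding mean_pmf_def using R(2) by (simp only: KM)
  also have "\<dots> = (\<Sum>j\<in>UNIV. A i j * mean_pmf X j)"
    by (simp add: intX mean_pmf_def)
  finally show "mean_pmf (remark_pmf A X) i = (\<Sum>j\<in>UNIV. A i j * mean_pmf X j)" .
qed

lemma ab_le: fixes a b :: nat shows "real a * real b \<le> (real a)\<^sup>2 + (real b)\<^sup>2"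
proof -
  have "a * b \<le> a * a + b * b"
  proof (cases "a \<le> b")
    case True then have "a * b \<le> b * b" by (rule mult_le_mono1)
    then show ?thesis using le_add2[of "b*b" "a*a"] by linarith
  next
    case False then have "a * b \<le> a * a" by (intro mult_le_mono2) simp
    then show ?thesis using le_add1[of "a*a" "b*b"] by linarith
  qed
  then have "real (a * b) \<le> real (a * a + b * b)" by (simp only: of_nat_le_iff)
  then show ?thesis by (simp add: power2_eq_square)
qed

lemma a_le: fixes a :: nat shows "real a \<le> real a * real a"
  by (metis of_nat_le_iff of_nat_mult le_square)

lemma part2:
  assumes sq: "\<And>j. integrable (measure_pmf X) (\<lambda>x. (real (x j))\<^sup>2)"
  shows "disp_pmf (remark_pmf A X) i k = (\<Sum>j\<in>UNIV. \<Sum>l\<in>UNIV. A i j * disp_pmf X j l * A k l)"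
proof -
  have intX: "integrable (measure_pmf X) (\<lambda>x. real (x j))" for j
    by (rule Bochner_Integration.integrable_bound[OF sq[of j]]) (auto intro!: AE_pmfI simp: power2_eq_square a_le)
  have intXX: "integrable (measure_pmf X) (\<lambda>x. real (x j) * real (x l))" for j l
    by (rule Bochner_Integration.integrable_bound[OF Bochner_Integration.integrable_add[OF sq[of j] sq[of l]]])
       (auto intro!: AE_pmfI simp: ab_le)
  have intIf: "integrable (measure_pmf X) (\<lambda>x. if j = l then real (x j) else 0)" for j l
    by (cases "j = l") (simp_all add: intX)
  have EIf: "measure_pmf.expectation X (\<lambda>x. if j = l then real (x j) else 0) = (if j = l then measure_pmf.expectation X (\<lambda>x. real (x j)) else 0)" for j l
    by (cases "j = l") simp_all
  define m where "m j = mean_pmf X j" for j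
  define EXX where "EXX j l = measure_pmf.expectation X (\<lambda>x. real (x j) * real (x l))" for j l
  define M where "M i = mean_pmf (remark_pmf A X) i" for i
  have Mi: "M i = (\<Sum>j\<in>UNIV. A i j * m j)" for i
    unfolding M_def m_def by (rule part1(2)[OF intX])
  define RHS where "RHS x = (\<Sum>j\<in>UNIV. \<Sum>l\<in>UNIV. A i j * A k l * (real (x j) * real (x l) - (if j = l then real (x j) else 0)))
     + (if i = k then (\<Sum>j\<in>UNIV. A i j * real (x j)) else 0)" for x :: "'d \<Rightarrow> nat"
  have KP: "measure_pmf.expectation (map_pmf (\<lambda>Z i. \<Sum>j\<in>UNIV. Z j i) (Kx A x)) (\<lambda>y. real (y i) * real (y k)) = RHS x" for x
    unfolding RHS_def by (simp only: integral_map_pmf K_prod[OF A_nonneg A_col])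
  have intR: "integrable (measure_pmf X) RHS"
    unfolding RHS_def by (cases "i = k") (auto intro!: Bochner_Integration.integrable_sum Bochner_Integration.integrable_diff
       Bochner_Integration.integrable_add Bochner_Integration.integrable_mult_right intX intXX intIf)
  have out: "integrable (measure_pmf X) (\<lambda>x. measure_pmf.expectation (map_pmf (\<lambda>Z i. \<Sum>j\<in>UNIV. Z j i) (Kx A x)) (\<lambda>y. real (y i) * real (y k)))"
    by (simp only: KP intR)
  have nnY: "\<And>y::'c\<Rightarrow>nat. 0 \<le> real (y i) * real (y k)" by simp
  note R = bind_pmf_nonneg[where g="\<lambda>y. real (y i) * real (y k)", OF nnY integrable_measure_pmf_finite[OF map_K_fin] out, folded remark_eq]
  have EYY: "measure_pmf.expectation (remark_pmf A X) (\<lambda>y. real (y i) * real (y k)) = measure_pmf.expectation X RHS"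
    using R(2) by (simp only: KP)
  also have "\<dots> = (\<Sum>j\<in>UNIV. \<Sum>l\<in>UNIV. A i j * A k l * (EXX j l - (if j = l then m j else 0)))
     + (if i = k then (\<Sum>j\<in>UNIV. A i j * m j) else 0)"
    unfolding RHS_def EXX_def m_def mean_pmf_def
    by (cases "i = k") (simp_all add: intX intXX intIf EIf Bochner_Integration.integral_sum Bochner_Integration.integral_diff
       Bochner_Integration.integrable_sum Bochner_Integration.integrable_diff)
  finally have EYY': "measure_pmf.expectation (remark_pmf A X) (\<lambda>y. real (y i) * real (y k)) = \<dots>" .
  have covY: "cov_pmf (remark_pmf A X) i k = measure_pmf.expectation (remark_pmf A X) (\<lambda>y. real (y i) * real (y k)) - M i * M k"
    unfolding M_def by (rule cov_expand[OF part1(1)[OF intX] part1(1)[OF intX] R(1)])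
  have covX: "cov_pmf X j l = EXX j l - m j * m l" for j l
    unfolding EXX_def m_def by (rule cov_expand[OF intX intX intXX])
  have dispY: "disp_pmf (remark_pmf A X) i k = (\<Sum>j\<in>UNIV. \<Sum>l\<in>UNIV. A i j * A k l * (EXX j l - (if j = l then m j else 0)))
     - M i * M k"
    unfolding disp_pmf_def using covY EYY' by (cases "i = k") (simp_all add: Mi M_def[symmetric])
  have "M i * M k = (\<Sum>j\<in>UNIV. \<Sum>l\<in>UNIV. A i j * A k l * (m j * m l))"
    unfolding Mi by (simp add: sum_product algebra_simps)
  then have "disp_pmf (remark_pmf A X) i k = (\<Sum>j\<in>UNIV. \<Sum>l\<in>UNIV. A i j * A k l * (EXX j l - (if j = l then m j else 0)) - A i j * A k l * (m j * m l))"
    unfolding dispY by (simp add: sum_subtractf)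
  also have "\<dots> = (\<Sum>j\<in>UNIV. \<Sum>l\<in>UNIV. A i j * disp_pmf X j l * A k l)"
    by (intro sum.cong refl) (simp add: disp_pmf_def covX m_def algebra_simps)
  finally show ?thesis .
qed

lemma part3:
  assumes "integrable (measure_pmf (remark_pmf A X)) (\<lambda>y. \<Prod>i\<in>UNIV. (1 + t i) ^ (y i))"
  shows "fmgf_pmf (remark_pmf A X) t = fmgf_pmf X (\<lambda>j. \<Sum>i\<in>UNIV. A i j * t i)"
  using bind_pmf_integral[OF assms[unfolded remark_eq]]
  by (simp add: fmgf_pmf_def remark_eq K_fmgf[OF A_nonneg A_col])

end

theorem theorem3:
  fixes X :: "('d::finite \<Rightarrow> nat) pmf"
    and A :: "'c::finite \<Rightarrow> 'd \<Rightarrow> real"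
  assumes A_nonneg: "\<And>i j. 0 \<le> A i j"
    and A_le1: "\<And>i j. A i j \<le> 1"
    and A_col: "\<And>j. (\<Sum>i\<in>UNIV. A i j) \<le> 1"
  defines "Y \<equiv> remark_pmf A X"
  shows
    "((\<forall>j. integrable (measure_pmf X) (\<lambda>x. real (x j))) \<longrightarrow>
        (\<forall>i. mean_pmf Y i = (\<Sum>j\<in>UNIV. A i j * mean_pmf X j)))
   \<and> ((\<forall>j. integrable (measure_pmf X) (\<lambda>x. (real (x j))\<^sup>2)) \<longrightarrow>
        (\<forall>i k. disp_pmf Y i k =
           (\<Sum>j\<in>UNIV. \<Sum>l\<in>UNIV. A i j * disp_pmf X j l * A k l)))
   \<and> (\<forall>t :: 'c \<Rightarrow> real.
        integrable (measure_pmf X)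
          (\<lambda>x. \<Prod>j\<in>UNIV. (1 + (\<Sum>i\<in>UNIV. A i j * t i)) ^ (x j)) \<and>
        integrable (measure_pmf Y) (\<lambda>y. \<Prod>i\<in>UNIV. (1 + t i) ^ (y i)) \<longrightarrow>
        fmgf_pmf Y t = fmgf_pmf X (\<lambda>j. \<Sum>i\<in>UNIV. A i j * t i))"
proof -
  have P1: "mean_pmf Y i = (\<Sum>j\<in>UNIV. A i j * mean_pmf X j)"
    if "\<forall>j. integrable (measure_pmf X) (\<lambda>x. real (x j))" for i
    unfolding Y_def using that by (intro part1(2)[OF A_nonneg A_col]) auto
  have P2: "disp_pmf Y i k = (\<Sum>j\<in>UNIV. \<Sum>l\<in>UNIV. A i j * disp_pmf X j l * A k l)"
    if "\<forall>j. integrable (measure_pmf X) (\<lambda>x. (real (x j))\<^sup>2)" for i k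
    unfolding Y_def using that by (intro part2[OF A_nonneg A_col]) auto
  have P3: "fmgf_pmf Y t = fmgf_pmf X (\<lambda>j. \<Sum>i\<in>UNIV. A i j * t i)"
    if "integrable (measure_pmf Y) (\<lambda>y. \<Prod>i\<in>UNIV. (1 + t i) ^ (y i))" for t
    using that unfolding Y_def by (intro part3[OF A_nonneg A_col])
  show ?thesis using P1 P2 P3 by blast
qed

end
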